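(* Let $G=(V,E)$ be a connected almost bipartite permutation graph that contains a hole, let $C$ be a shortest hole of $G$, $m=|C|$, and let $c_0,c_1,\dots,c_{m-1}$ be the vertices of $C$ in cyclic order, with indices taken modulo $m$. Then for every vertex $v\in V$ either $N(v)\cap C=\{c_i\}$ for some $i\in\{0,\dots,m-1\}$, or $N(v)\cap C=\{c_i,c_{i+2}\}$ for some $i\in\{0,\dots,m-1\}$.
   Context: All graphs are finite, simple, undirected; $N(v)$ denotes the (open) neighborhood of $v$. A hole is an induced cycle on at least five vertices. $K_3$ is the triangle and $C_k$ the cycle on $k$ vertices. $T_2$ is the tree on 7 vertices obtained from the claw $K_{1,3}$ by subdividing each of its three edges once. $X_2$ is the 7-vertex graph obtained from a 4-cycle by attaching one new pendant vertex to each of three of its four vertices. $X_3$ is the 7-vertex graph obtained from the domino (two 4-cycles sharing exactly one edge) by attaching one new pendant vertex to one endpoint of the shared edge. A graph is an almost bipartite permutation graph if it contains none of $T_2, X_2, X_3, K_3, C_5,\dots,C_9$ as an induced subgraph. *)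

theory Defs
  imports Main
begin

definition simple_graph :: "'a set \<Rightarrow> ('a \<Rightarrow> 'a \<Rightarrow> bool) \<Rightarrow> bool" where
  "simple_graph V E \<longleftrightarrow> finite V \<and> (\<forall>x y. E x y \<longrightarrow> x \<in> V \<and> y \<in> V)
     \<and> (\<forall>x y. E x y \<longrightarrow> E y x) \<and> (\<forall>x. \<not> E x x)"

definition connected_graph :: "'a set \<Rightarrow> ('a \<Rightarrow> 'a \<Rightarrow> bool) \<Rightarrow> bool" where
  "connected_graph V E \<longleftrightarrow> (\<forall>x\<in>V. \<forall>y\<in>V. E\<^sup>*\<^sup>* x y)"

definition nbhd :: "('a \<Rightarrow> 'a \<Rightarrow> bool) \<Rightarrow> 'a \<Rightarrow> 'a set" where
  "nbhd E v = {u. E v u}"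

definition edges_rel :: "(nat \<times> nat) list \<Rightarrow> nat \<Rightarrow> nat \<Rightarrow> bool" where
  "edges_rel es i j \<longleftrightarrow> (i, j) \<in> set es \<or> (j, i) \<in> set es"

definition has_induced :: "'a set \<Rightarrow> ('a \<Rightarrow> 'a \<Rightarrow> bool) \<Rightarrow> nat \<Rightarrow> (nat \<Rightarrow> nat \<Rightarrow> bool) \<Rightarrow> bool" where
  "has_induced V E n H \<longleftrightarrow> (\<exists>f. inj_on f {0..<n} \<and> f ` {0..<n} \<subseteq> V \<and>
     (\<forall>i<n. \<forall>j<n. E (f i) (f j) \<longleftrightarrow> H i j))"

definition K3_rel :: "nat \<Rightarrow> nat \<Rightarrow> bool" where
  "K3_rel = edges_rel [(0,1),(1,2),(0,2)]"

definition cycle_rel :: "nat \<Rightarrow> nat \<Rightarrow> nat \<Rightarrow> bool" where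
  "cycle_rel k i j \<longleftrightarrow> j = Suc i mod k \<or> i = Suc j mod k"

text \<open>T2: claw with centre 0 and leaves 1,2,3, each edge subdivided (4,5,6 the new ends).\<close>
definition T2_rel :: "nat \<Rightarrow> nat \<Rightarrow> bool" where
  "T2_rel = edges_rel [(0,1),(0,2),(0,3),(1,4),(2,5),(3,6)]"

text \<open>X2: 4-cycle 0-1-2-3-0 with pendants 4,5,6 at 0,1,2.\<close>
definition X2_rel :: "nat \<Rightarrow> nat \<Rightarrow> bool" where
  "X2_rel = edges_rel [(0,1),(1,2),(2,3),(3,0),(4,0),(5,1),(6,2)]"

text \<open>X3: domino with squares 0-1-4-3 and 1-2-5-4 sharing edge 1-4, pendant 6 at 1.\<close>
definition X3_rel :: "nat \<Rightarrow> nat \<Rightarrow> bool" where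
  "X3_rel = edges_rel [(0,1),(1,2),(3,4),(4,5),(0,3),(1,4),(2,5),(6,1)]"

definition almost_bipartite_permutation :: "'a set \<Rightarrow> ('a \<Rightarrow> 'a \<Rightarrow> bool) \<Rightarrow> bool" where
  "almost_bipartite_permutation V E \<longleftrightarrow>
     \<not> has_induced V E 7 T2_rel \<and> \<not> has_induced V E 7 X2_rel \<and>
     \<not> has_induced V E 7 X3_rel \<and> \<not> has_induced V E 3 K3_rel \<and>
     (\<forall>k. 5 \<le> k \<and> k \<le> 9 \<longrightarrow> \<not> has_induced V E k (cycle_rel k))"

definition is_hole :: "'a set \<Rightarrow> ('a \<Rightarrow> 'a \<Rightarrow> bool) \<Rightarrow> 'a list \<Rightarrow> bool" where
  "is_hole V E cs \<longleftrightarrow> distinct cs \<and> set cs \<subseteq> V \<and> 5 \<le> length cs \<and>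
     (\<forall>i<length cs. \<forall>j<length cs. E (cs ! i) (cs ! j) \<longleftrightarrow> cycle_rel (length cs) i j)"

definition shortest_hole :: "'a set \<Rightarrow> ('a \<Rightarrow> 'a \<Rightarrow> bool) \<Rightarrow> 'a list \<Rightarrow> bool" where
  "shortest_hole V E cs \<longleftrightarrow> is_hole V E cs \<and> (\<forall>ds. is_hole V E ds \<longrightarrow> length cs \<le> length ds)"

end

theory Submission
  imports Defs
begin

lemma all_less_7: "(\<forall>i<(7::nat). P i) \<longleftrightarrow> P 0 \<and> P 1 \<and> P 2 \<and> P 3 \<and> P 4 \<and> P 5 \<and> P 6"
  by (simp add: numeral_eq_Suc All_less_Suc conj_ac)

lemma all_less_3: "(\<forall>i<(3::nat). P i) \<longleftrightarrow> P 0 \<and> P 1 \<and> P 2"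
  by (simp add: numeral_eq_Suc All_less_Suc conj_ac)

lemma has_induced_list:
  assumes "distinct xs" "set xs \<subseteq> V" "\<forall>i<length xs. \<forall>j<length xs. E (xs!i) (xs!j) \<longleftrightarrow> H i j"
  shows "has_induced V E (length xs) H"
  unfolding has_induced_def
  apply (rule exI[of _ "nth xs"])
  using assms by (auto simp: inj_on_nth)

lemma has_induced_listn:
  assumes "length xs = n" "distinct xs" "set xs \<subseteq> V" "\<forall>i<n. \<forall>j<n. E (xs!i) (xs!j) \<longleftrightarrow> H i j"
  shows "has_induced V E n H"
  using has_induced_list[of xs V E H] assms by simp

lemma has_induced_list7:
  assumes "length xs = 7" "distinct xs" "set xs \<subseteq> V" "\<forall>i<7. \<forall>j<7. E (xs!i) (xs!j) \<longleftrightarrow> H i j"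
  shows "has_induced V E 7 H"
  using has_induced_list[of xs V E H] assms by simp

locale ctx =
  fixes V :: "'a set" and E :: "'a \<Rightarrow> 'a \<Rightarrow> bool" and cs :: "'a list"
  assumes sg: "simple_graph V E" and abp: "almost_bipartite_permutation V E"
    and sh: "shortest_hole V E cs"
begin

abbreviation M :: int where "M \<equiv> int (length cs)"

definition c :: "int \<Rightarrow> 'a" where "c k = cs ! nat (k mod M)"

lemma hole: "is_hole V E cs" using sh by (simp add: shortest_hole_def)

lemma Esym: "E x y \<Longrightarrow> E y x" using sg by (simp add: simple_graph_def)
lemma Eirr: "\<not> E x x" using sg by (simp add: simple_graph_def)
lemma EV: "E x y \<Longrightarrow> x \<in> V \<and> y \<in> V" using sg by (simp add: simple_graph_def)

lemma triangle_free: "E x y \<Longrightarrow> E y z \<Longrightarrow> E x z \<Longrightarrow> False"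
proof -
  assume a: "E x y" "E y z" "E x z"
  have "has_induced V E 3 K3_rel"
    apply (rule has_induced_listn[of "[x,y,z]"])
    using a EV[OF a(1)] EV[OF a(2)] Esym[OF a(1)] Esym[OF a(2)] Esym[OF a(3)] Eirr[of x] Eirr[of y] Eirr[of z]
    by (auto simp: all_less_3 K3_rel_def edges_rel_def)
  then show False using abp by (simp add: almost_bipartite_permutation_def)
qed

lemma m_ge10: "length cs \<ge> 10"
proof (rule ccontr)
  assume "\<not> ?thesis"
  moreover have "5 \<le> length cs" using hole by (simp add: is_hole_def)
  moreover have "has_induced V E (length cs) (cycle_rel (length cs))"
    apply (rule has_induced_list) using hole by (auto simp: is_hole_def)
  ultimately show False using abp by (simp add: almost_bipartite_permutation_def)
qed

lemma Mpos: "M \<ge> 10" using m_ge10 by simp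

lemma mod_bounds: "0 \<le> k mod M" "k mod M < M"
proof -
  have "0 < M" using Mpos by linarith
  then show "0 \<le> k mod M" "k mod M < M" by (rule pos_mod_sign, rule pos_mod_bound)
qed

lemma nat_mod_lt: "nat (k mod M) < length cs"
  using mod_bounds[of k] by (simp add: nat_less_iff)

lemma c_in: "c k \<in> set cs"
proof -
  have "nat (k mod M) < length cs" by (rule nat_mod_lt)
  then show ?thesis by (simp add: c_def)
qed

lemma c_V: "c k \<in> V" using c_in hole by (auto simp: is_hole_def)

lemma c_nat: "j < length cs \<Longrightarrow> c (int j) = cs ! j"
  by (simp add: c_def nat_mod_distrib)

lemma c_modeq: "c a = c (a mod M)" by (simp add: c_def)

lemma c_eq_iff: "c a = c b \<longleftrightarrow> a mod M = b mod M"
proof -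
  have l: "nat (a mod M) < length cs" "nat (b mod M) < length cs" by (auto simp: nat_mod_lt)
  have "c a = c b \<longleftrightarrow> nat (a mod M) = nat (b mod M)"
    unfolding c_def using hole l by (simp add: is_hole_def nth_eq_iff_index_eq)
  also have "\<dots> \<longleftrightarrow> a mod M = b mod M" using mod_bounds[of a] mod_bounds[of b] by (simp add: nat_eq_iff)
  finally show ?thesis .
qed

lemma c_per: "c (a + M) = c a" by (simp add: c_eq_iff)

lemma c_adj: "E (c a) (c b) \<longleftrightarrow> (M dvd (b - a - 1) \<or> M dvd (a - b - 1))"
proof -
  define p where "p = nat (a mod M)"
  define q where "q = nat (b mod M)"
  have l: "p < length cs" "q < length cs" by (auto simp: nat_mod_lt p_def q_def)
  have ip: "int p = a mod M" "int q = b mod M" using mod_bounds[of a] mod_bounds[of b] by (auto simp: p_def q_def)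
  have "E (c a) (c b) \<longleftrightarrow> cycle_rel (length cs) p q"
    unfolding c_def p_def[symmetric] q_def[symmetric] using hole l by (simp add: is_hole_def)
  also have "\<dots> \<longleftrightarrow> int q = int (Suc p mod length cs) \<or> int p = int (Suc q mod length cs)"
    by (simp add: cycle_rel_def)
  also have "\<dots> \<longleftrightarrow> b mod M = (a + 1) mod M \<or> a mod M = (b + 1) mod M"
    by (simp add: ip zmod_int mod_add_left_eq mod_add_right_eq add.commute[of 1])
  also have "\<dots> \<longleftrightarrow> (M dvd (b - a - 1) \<or> M dvd (a - b - 1))"
    by (simp add: mod_eq_dvd_iff diff_diff_eq)
  finally show ?thesis .
qed

lemma dvd_small: "\<bar>x\<bar> < M \<Longrightarrow> M dvd x \<longleftrightarrow> x = 0"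
  using dvd_imp_le_int[of x M] Mpos by auto

lemma c_adj_small: "\<bar>a - b\<bar> < M - 1 \<Longrightarrow> E (c a) (c b) \<longleftrightarrow> \<bar>a - b\<bar> = 1"
  unfolding c_adj by (subst dvd_small, linarith)+ linarith

lemma c_eq_small: "\<bar>a - b\<bar> < M \<Longrightarrow> c a = c b \<longleftrightarrow> a = b"
  unfolding c_eq_iff mod_eq_dvd_iff by (subst dvd_small, linarith) linarith

lemma c_adj8: "\<bar>a - b\<bar> \<le> 8 \<Longrightarrow> E (c a) (c b) \<longleftrightarrow> \<bar>a - b\<bar> = 1"
  using Mpos by (intro c_adj_small) linarith

lemma c_eq8: "\<bar>a - b\<bar> \<le> 8 \<Longrightarrow> c a = c b \<longleftrightarrow> a = b"
  using Mpos by (intro c_eq_small) linarith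

lemma set_cs_iff: "x \<in> set cs \<longleftrightarrow> (\<exists>k. 0 \<le> k \<and> k < M \<and> x = c (b + k))"
proof
  assume "x \<in> set cs"
  then obtain j where j: "j < length cs" "x = cs ! j" by (auto simp: in_set_conv_nth)
  have "c (b + (int j - b) mod M) = c (int j)" by (simp add: c_eq_iff mod_add_right_eq)
  then show "\<exists>k. 0 \<le> k \<and> k < M \<and> x = c (b + k)" using j Mpos c_nat mod_bounds
    by (intro exI[of _ "(int j - b) mod M"]) auto
next
  assume "\<exists>k. 0 \<le> k \<and> k < M \<and> x = c (b + k)" then show "x \<in> set cs" using c_in by auto
qed

lemma suc2_mod: "p \<le> d \<Longrightarrow> Suc (Suc p) mod (d + 2) = (if p = d then 0 else Suc (Suc p))"
  by auto

lemma hole_build: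
  assumes v: "v \<in> V" "v \<notin> set cs" and e0: "E v (c i)" and ed: "E v (c (i + int d))"
    and gap: "\<forall>k. 0 < k \<and> k < d \<longrightarrow> \<not> E v (c (i + int k))" and d: "3 \<le> d" "int d \<le> M - 2"
  shows "is_hole V E (v # map (\<lambda>k. c (i + int k)) [0..<d+1])"
proof -
  let ?ds = "v # map (\<lambda>k. c (i + int k)) [0..<d+1]"
  have inj: "inj_on (\<lambda>k. c (i + int k)) (set [0..<d+1])"
  proof (rule inj_onI)
    fix x y assume "x \<in> set [0..<d+1]" "y \<in> set [0..<d+1]" "c (i + int x) = c (i + int y)"
    then show "x = y" using d by (subst (asm) c_eq_small) auto
  qed
  have dist: "distinct ?ds" using inj v(2) c_in by (auto simp: distinct_map)
  have sub: "set ?ds \<subseteq> V" using v c_V by auto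
  have len: "length ?ds = d + 2" by simp
  have nth: "\<And>q. q \<le> d \<Longrightarrow> ?ds ! Suc q = c (i + int q)"
    by (simp del: upt_Suc add: nth_append)
  have vE: "\<And>q. q \<le> d \<Longrightarrow> E v (c (i + int q)) \<longleftrightarrow> q = 0 \<or> q = d"
    using e0 ed gap by (metis add.right_neutral le_neq_implies_less not_gr_zero of_nat_0)
  have A: "\<forall>p<d+2. \<forall>q<d+2. E (?ds!p) (?ds!q) \<longleftrightarrow> cycle_rel (d+2) p q"
  proof (intro allI impI)
    fix p q assume pq: "p < d + 2" "q < d + 2"
    show "E (?ds!p) (?ds!q) \<longleftrightarrow> cycle_rel (d+2) p q"
    proof (cases p)
      case 0
      then show ?thesis
      proof (cases q)
        case 0
        then show ?thesis using \<open>p = 0\<close> d Eirr by (simp add: cycle_rel_def)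
      next
        case (Suc q')
        have "q' \<le> d" using pq Suc by simp
        then show ?thesis using \<open>p = 0\<close> Suc nth[of q'] vE[of q'] suc2_mod[of q' d]
          by (auto simp: cycle_rel_def simp del: upt_Suc)
      qed
    next
      case (Suc p')
      have p': "p' \<le> d" using pq Suc by simp
      show ?thesis
      proof (cases q)
        case 0
        then show ?thesis using Suc p' nth[of p'] vE[of p'] suc2_mod[of p' d] Esym
          by (auto simp: cycle_rel_def simp del: upt_Suc)
      next
        case (Suc q')
        have q': "q' \<le> d" using pq Suc by simp
        have "E (c (i + int p')) (c (i + int q')) \<longleftrightarrow> \<bar>(i + int p') - (i + int q')\<bar> = 1"
          using p' q' d by (intro c_adj_small) linarith
        then show ?thesis using \<open>p = Suc p'\<close> Suc nth[of p'] nth[of q'] suc2_mod[of p' d] suc2_mod[of q' d] p' q'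
          by (auto simp: cycle_rel_def simp del: upt_Suc)
      qed
    qed
  qed
  show ?thesis unfolding is_hole_def using dist sub len A d by simp
qed

lemma gap:
  assumes v: "v \<in> V" "v \<notin> set cs" and e0: "E v (c i)"
  shows "\<exists>d. 2 \<le> d \<and> d \<le> M \<and> E v (c (i+d)) \<and> (\<forall>k. 0<k \<and> k<d \<longrightarrow> \<not> E v (c (i+k)))
           \<and> (d = 2 \<or> d = M - 2 \<or> d = M)"
proof -
  define P where "P = (\<lambda>d::nat. 0 < d \<and> E v (c (i + int d)))"
  have ne: "cs \<noteq> []" using m_ge10 by auto
  have Pm: "P (length cs)" using e0 c_per ne by (simp add: P_def)
  define d where "d = (LEAST d. P d)"
  have Pd: "P d" using LeastI[of P] Pm d_def by blast
  have dle: "d \<le> length cs" using Least_le[of P] Pm d_def by blast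
  have gp: "\<forall>k. 0<k \<and> k<d \<longrightarrow> \<not> E v (c (i+int k))" using not_less_Least[of _ P] d_def P_def by blast
  have d1: "d \<noteq> 1"
  proof
    assume "d = 1"
    then have "E v (c (i+1))" using Pd P_def by simp
    moreover have "E (c i) (c (i+1))" by (simp add: c_adj8)
    ultimately show False using e0 triangle_free by blast
  qed
  have dm1: "d \<noteq> length cs - 1"
  proof
    assume "d = length cs - 1"
    then have "i + int d = (i - 1) + M" using m_ge10 by simp
    then have "E v (c (i - 1))" using Pd P_def c_per by metis
    moreover have "E (c (i - 1)) (c i)" by (simp add: c_adj8)
    ultimately show False using e0 triangle_free by blast
  qed
  have dmid: "3 \<le> d \<Longrightarrow> d \<le> length cs - 2 \<Longrightarrow> d = length cs - 2"
  proof -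
    assume a: "3 \<le> d" "d \<le> length cs - 2"
    have "is_hole V E (v # map (\<lambda>k. c (i + int k)) [0..<d+1])"
      using hole_build[OF v e0 _ gp a(1)] Pd P_def a(2) m_ge10 by simp
    then have "length cs \<le> d + 2" using sh by (force simp: shortest_hole_def)
    then show ?thesis using a by simp
  qed
  have d0: "0 < d" using Pd P_def by simp
  have cases: "d = 2 \<or> d = length cs - 2 \<or> d = length cs"
    using d1 dm1 dmid dle d0 m_ge10 by linarith
  show ?thesis
  proof (intro exI conjI)
    show "2 \<le> int d" "int d \<le> M" using d0 d1 dle by auto
    show "E v (c (i + int d))" using Pd P_def by simp
    show "\<forall>k. 0 < k \<and> k < int d \<longrightarrow> \<not> E v (c (i + k))"
    proof (intro allI impI)
      fix k :: int assume k: "0 < k \<and> k < int d"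
      then have "k = int (nat k)" by simp
      then show "\<not> E v (c (i + k))" using gp k by (metis of_nat_0_less_iff of_nat_less_iff)
    qed
    show "int d = 2 \<or> int d = M - 2 \<or> int d = M" using cases m_ge10 by auto
  qed
qed

lemma nb_char:
  assumes "\<And>k. 0 \<le> k \<Longrightarrow> k < M \<Longrightarrow> E v (c (b+k)) \<longleftrightarrow> P k"
  shows "nbhd E v \<inter> set cs = {x. \<exists>k. 0\<le>k \<and> k<M \<and> P k \<and> x = c (b+k)}"
proof (intro set_eqI iffI)
  fix x assume "x \<in> nbhd E v \<inter> set cs"
  then have x: "E v x" "x \<in> set cs" by (auto simp: nbhd_def)
  then obtain k where k: "0 \<le> k" "k < M" "x = c (b+k)" using set_cs_iff[of x b] by auto
  then show "x \<in> {x. \<exists>k. 0\<le>k \<and> k<M \<and> P k \<and> x = c (b+k)}" using assms x(1) by auto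
next
  fix x assume "x \<in> {x. \<exists>k. 0\<le>k \<and> k<M \<and> P k \<and> x = c (b+k)}"
  then obtain k where k: "0 \<le> k" "k < M" "P k" "x = c (b+k)" by blast
  then show "x \<in> nbhd E v \<inter> set cs" using assms[of k] c_in by (auto simp: nbhd_def)
qed

lemma set1: "{x. \<exists>k. 0\<le>k \<and> k<M \<and> k = 0 \<and> x = c (b+k)} = {c b}"
proof (intro equalityI subsetI)
  fix x assume "x \<in> {c b}"
  then show "x \<in> {x. \<exists>k. 0\<le>k \<and> k<M \<and> k = 0 \<and> x = c (b+k)}"
    using Mpos by (intro CollectI exI[of _ 0]) auto
qed auto

lemma set2: "{x. \<exists>k. 0\<le>k \<and> k<M \<and> (k = 0 \<or> k = 2) \<and> x = c (b+k)} = {c b, c (b+2)}"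
proof (intro equalityI subsetI)
  fix x assume "x \<in> {c b, c (b+2)}"
  then consider "x = c (b+0)" | "x = c (b+2)" by auto
  then show "x \<in> {x. \<exists>k. 0\<le>k \<and> k<M \<and> (k = 0 \<or> k = 2) \<and> x = c (b+k)}"
  proof cases
    case 1 then show ?thesis using Mpos by (intro CollectI exI[of _ 0]) auto
  next
    case 2 then show ?thesis using Mpos by (intro CollectI exI[of _ 2]) auto
  qed
qed auto

lemma X3_free:
  assumes v: "v \<in> V" "v \<notin> set cs" and e: "E v (c i)" "E v (c (i+2))" "E v (c (i+4))" "E v (c (i+6))"
    and n: "\<not> E v (c (i+1))" "\<not> E v (c (i+3))"
  shows False
proof -
  have cv: "\<And>k. c k \<noteq> v" "\<And>k. v \<noteq> c k" using v(2) c_in by metis+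
  have es: "\<And>k. E (c k) v \<longleftrightarrow> E v (c k)" using Esym by blast
  have "has_induced V E 7 X3_rel"
    apply (rule has_induced_list7[of "[c i, v, c(i+4), c(i+1), c(i+2), c(i+3), c(i+6)]"])
    using v c_V e n cv es
    by (simp_all add: all_less_7 X3_rel_def edges_rel_def c_adj8 c_eq8 Eirr)
  then show False using abp by (simp add: almost_bipartite_permutation_def)
qed

lemma T2_free:
  assumes u: "u \<in> V" "u \<notin> set cs" "w \<in> V" "w \<notin> set cs" and uw: "E u w" and w: "\<And>k. \<not> E w (c k)"
    and e: "E u (c a)" and n: "\<not> E u (c (a+1))" "\<not> E u (c (a - 1))" "\<not> E u (c (a+2))" "\<not> E u (c (a - 2))"
  shows False
proof -
  have cv: "\<And>k. c k \<noteq> u" "\<And>k. u \<noteq> c k" "\<And>k. c k \<noteq> w" "\<And>k. w \<noteq> c k"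
    using u c_in by metis+
  have es: "\<And>k. E (c k) u \<longleftrightarrow> E u (c k)" "\<And>k. E (c k) w \<longleftrightarrow> E w (c k)" "E w u" using Esym uw by blast+
  have uw': "u \<noteq> w" "w \<noteq> u" using uw Eirr by auto
  have "has_induced V E 7 T2_rel"
    apply (rule has_induced_list7[of "[c a, c(a+1), c(a - 1), u, c(a+2), c(a - 2), w]"])
    using u c_V e n cv es uw uw' w
    by (simp_all add: all_less_7 T2_rel_def edges_rel_def c_adj8 c_eq8 Eirr)
  then show False using abp by (simp add: almost_bipartite_permutation_def)
qed

lemma X2_free:
  assumes u: "u \<in> V" "u \<notin> set cs" "w \<in> V" "w \<notin> set cs" and uw: "E u w" and w: "\<And>k. \<not> E w (c k)"
    and e: "E u (c a)" "E u (c (a+2))" and n: "\<not> E u (c (a+1))" "\<not> E u (c (a - 1))" "\<not> E u (c (a+3))"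
  shows False
proof -
  have cv: "\<And>k. c k \<noteq> u" "\<And>k. u \<noteq> c k" "\<And>k. c k \<noteq> w" "\<And>k. w \<noteq> c k"
    using u c_in by metis+
  have es: "\<And>k. E (c k) u \<longleftrightarrow> E u (c k)" "\<And>k. E (c k) w \<longleftrightarrow> E w (c k)" "E w u" using Esym uw by blast+
  have uw': "u \<noteq> w" "w \<noteq> u" using uw Eirr by auto
  have "has_induced V E 7 X2_rel"
    apply (rule has_induced_list7[of "[c a, u, c(a+2), c(a+1), c(a - 1), w, c(a+3)]"])
    using u c_V e n cv es uw uw' w
    by (simp_all add: all_less_7 X2_rel_def edges_rel_def c_adj8 c_eq8 Eirr)
  then show False using abp by (simp add: almost_bipartite_permutation_def)
qed

lemma claim1:
  assumes v: "v \<in> V" "v \<notin> set cs" and e0: "E v (c i)"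
  shows "(\<exists>a. nbhd E v \<inter> set cs = {c a}) \<or> (\<exists>a. nbhd E v \<inter> set cs = {c a, c (a+2)})"
proof -
  have M0: "0 < M" using Mpos by linarith
  obtain d where d: "2 \<le> d" "d \<le> M" "E v (c (i+d))" "\<forall>k. 0<k \<and> k<d \<longrightarrow> \<not> E v (c (i+k))"
      "d = 2 \<or> d = M - 2 \<or> d = M"
    using gap[OF v e0] by blast
  consider "d = M" | "d = M - 2" | "d = 2" using d(5) by blast
  then show ?thesis
  proof cases
    case 1
    have "\<And>k. 0 \<le> k \<Longrightarrow> k < M \<Longrightarrow> E v (c (i+k)) \<longleftrightarrow> k = 0"
      using e0 d(4) 1 by (case_tac "k = 0") auto
    then have "nbhd E v \<inter> set cs = {x. \<exists>k. 0\<le>k \<and> k<M \<and> k = 0 \<and> x = c (i+k)}" by (rule nb_char)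
    also have "\<dots> = {c i}" by (rule set1)
    finally show ?thesis by blast
  next
    case 2
    have "\<And>k. 0 \<le> k \<Longrightarrow> k < M \<Longrightarrow> E v (c (i - 2 + k)) \<longleftrightarrow> k = 0 \<or> k = 2"
    proof -
      fix k assume k: "0 \<le> k" "k < M"
      consider "k = 0" | "k = 1" | "k = 2" | "3 \<le> k" using k by linarith
      then show "E v (c (i - 2 + k)) \<longleftrightarrow> k = 0 \<or> k = 2"
      proof cases
        case 1
        have "i + d = (i - 2) + M" using 2 by simp
        then have "c (i - 2) = c (i + d)" using c_per[of "i - 2"] by metis
        then show ?thesis using 1 d(3) by simp
      next
        case k1: 2
        have "E (c (i - 1)) (c i)" by (simp add: c_adj8)
        then have "\<not> E v (c (i - 1))" using e0 triangle_free by blast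
        moreover have "i - 2 + k = i - 1" using k1 by simp
        ultimately show ?thesis using k1 by simp
      next
        case 3 then show ?thesis using e0 by simp
      next
        case 4
        have "c (i - 2 + k) = c (i + (k - 2))" by (simp add: algebra_simps)
        then show ?thesis using 4 k d(4) 2 by auto
      qed
    qed
    then have "nbhd E v \<inter> set cs = {x. \<exists>k. 0\<le>k \<and> k<M \<and> (k = 0 \<or> k = 2) \<and> x = c (i - 2 + k)}"
      by (rule nb_char)
    also have "\<dots> = {c (i - 2), c (i - 2 + 2)}" by (rule set2)
    finally show ?thesis by blast
  next
    case 3
    have e2: "E v (c (i+2))" using d(3) 3 by simp
    have n1: "\<not> E v (c (i+1))" using d(4) 3 by simp
    obtain d2 where d2: "2 \<le> d2" "d2 \<le> M" "E v (c (i+2+d2))" "\<forall>k. 0<k \<and> k<d2 \<longrightarrow> \<not> E v (c (i+2+k))"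
        "d2 = 2 \<or> d2 = M - 2 \<or> d2 = M"
      using gap[OF v e2] by blast
    have nM: "d2 \<noteq> M"
    proof
      assume "d2 = M"
      then have "0 < M - 2 \<and> M - 2 < d2" using Mpos by linarith
      then have "\<not> E v (c (i + 2 + (M - 2)))" using d2(4) by blast
      moreover have "i + 2 + (M - 2) = i + M" by simp
      ultimately show False using e0 c_per by metis
    qed
    consider "d2 = M - 2" | "d2 = 2" using d2(5) nM by blast
    then show ?thesis
    proof cases
      case 1
      have "\<And>k. 0 \<le> k \<Longrightarrow> k < M \<Longrightarrow> E v (c (i + k)) \<longleftrightarrow> k = 0 \<or> k = 2"
      proof -
        fix k assume k: "0 \<le> k" "k < M"
        consider "k = 0" | "k = 1" | "k = 2" | "3 \<le> k" using k by linarith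
        then show "E v (c (i + k)) \<longleftrightarrow> k = 0 \<or> k = 2"
        proof cases
          case 4
          have "0 < k - 2 \<and> k - 2 < d2" using 4 k 1 by linarith
          then have "\<not> E v (c (i + 2 + (k - 2)))" using d2(4) by blast
          moreover have "i + 2 + (k - 2) = i + k" by simp
          ultimately show ?thesis using 4 by simp
        qed (use e0 e2 n1 in auto)
      qed
      then have "nbhd E v \<inter> set cs = {x. \<exists>k. 0\<le>k \<and> k<M \<and> (k = 0 \<or> k = 2) \<and> x = c (i + k)}"
        by (rule nb_char)
      also have "\<dots> = {c (i), c (i + 2)}" by (rule set2)
      finally show ?thesis by blast
    next
      case 2
      have e4: "E v (c (i+4))" using d2(3) 2 by (simp add: algebra_simps)
      have n3: "\<not> E v (c (i+3))" using d2(4) 2 by (auto simp: algebra_simps dest: spec[of _ 1])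
      obtain d4 where d4: "2 \<le> d4" "d4 \<le> M" "E v (c (i+4+d4))" "\<forall>k. 0<k \<and> k<d4 \<longrightarrow> \<not> E v (c (i+4+k))"
          "d4 = 2 \<or> d4 = M - 2 \<or> d4 = M"
        using gap[OF v e4] by blast
      have n4: "d4 = 2"
      proof (rule ccontr)
        assume "d4 \<noteq> 2"
        then have "M - 4 < d4" using d4(5) by auto
        then have "0 < M - 4 \<and> M - 4 < d4" using Mpos by linarith
        then have "\<not> E v (c (i + 4 + (M - 4)))" using d4(4) by blast
        moreover have "i + 4 + (M - 4) = i + M" by simp
        ultimately show False using e0 c_per by metis
      qed
      have e6: "E v (c (i+6))" using d4(3) n4 by (simp add: algebra_simps)
      show ?thesis using X3_free[OF v e0 e2 e4 e6 n1 n3] by blast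
    qed
  qed
qed

lemma far:
  assumes "E\<^sup>*\<^sup>* x y" "y \<in> set cs" "x \<notin> set cs" "\<forall>z\<in>set cs. \<not> E x z"
  shows "\<exists>w u. w \<in> V \<and> u \<in> V \<and> w \<notin> set cs \<and> u \<notin> set cs \<and> (\<forall>z\<in>set cs. \<not> E w z) \<and> E w u
           \<and> (\<exists>z\<in>set cs. E u z)"
  using assms
proof (induction rule: converse_rtranclp_induct)
  case base
  then show ?case by simp
next
  case (step x x')
  show ?case
  proof (cases "\<exists>z\<in>set cs. E x' z")
    case True
    have "x' \<notin> set cs" using step by blast
    then show ?thesis using True step EV by blast
  next
    case False
    have "x' \<notin> set cs" using step by blast
    then show ?thesis using step False by blast
  qed
qed

lemma conv: "\<exists>i<length cs. cs ! i = c a \<and> cs ! ((i+2) mod length cs) = c (a+2)"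
proof -
  define i where "i = nat (a mod M)"
  have i: "i < length cs" "int i = a mod M" using nat_mod_lt mod_bounds[of a] by (auto simp: i_def)
  have "cs ! i = c a" by (simp add: c_def i_def)
  moreover have "cs ! ((i+2) mod length cs) = c (a+2)"
  proof -
    have "(i+2) mod length cs < length cs" using m_ge10 by (intro mod_less_divisor) linarith
    then have "cs ! ((i+2) mod length cs) = c (int ((i+2) mod length cs))" by (simp add: c_nat)
    also have "\<dots> = c (a + 2)" by (simp add: c_eq_iff zmod_int i(2) mod_add_left_eq add.commute[of 2])
    finally show ?thesis .
  qed
  ultimately show ?thesis using i by blast
qed

lemma main:
  assumes conn: "connected_graph V E" and v: "v \<in> V"
  shows "(\<exists>a. nbhd E v \<inter> set cs = {c a}) \<or> (\<exists>a. nbhd E v \<inter> set cs = {c a, c (a+2)})"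
proof (cases "v \<in> set cs")
  case True
  then obtain j where j: "v = c j" using set_cs_iff[of v 0] by auto
  have "\<And>k. 0 \<le> k \<Longrightarrow> k < M \<Longrightarrow> E v (c (j - 1 + k)) \<longleftrightarrow> k = 0 \<or> k = 2"
  proof -
    fix k assume k: "0 \<le> k" "k < M"
    have "E (c j) (c (j - 1 + k)) \<longleftrightarrow> \<bar>j - (j - 1 + k)\<bar> = 1"
      using k Mpos by (intro c_adj_small) linarith
    then show "E v (c (j - 1 + k)) \<longleftrightarrow> k = 0 \<or> k = 2" using j by auto
  qed
  then have "nbhd E v \<inter> set cs = {x. \<exists>k. 0\<le>k \<and> k<M \<and> (k = 0 \<or> k = 2) \<and> x = c (j - 1 + k)}"
    by (rule nb_char)
  also have "\<dots> = {c (j - 1), c (j - 1 + 2)}" by (rule set2)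
  finally show ?thesis by blast
next
  case False
  have wc: "\<And>w k. w \<notin> set cs \<Longrightarrow> w \<noteq> c k" using c_in by metis
  have "\<exists>z\<in>set cs. E v z"
  proof (rule ccontr)
    assume nz: "\<not> ?thesis"
    have "cs ! 0 \<in> set cs" using m_ge10 by (intro nth_mem) linarith
    moreover then have "E\<^sup>*\<^sup>* v (cs ! 0)" using conn v hole by (auto simp: connected_graph_def is_hole_def)
    ultimately obtain w u where wu: "w \<in> V" "u \<in> V" "w \<notin> set cs" "u \<notin> set cs" "\<forall>z\<in>set cs. \<not> E w z"
        "E w u" "\<exists>z\<in>set cs. E u z"
      using far[of v "cs ! 0"] False nz by blast
    have uw: "E u w" using wu(6) Esym by blast
    have wn: "\<And>k. \<not> E w (c k)" using wu(5) c_in by blast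
    obtain z where z: "z \<in> set cs" "E u z" using wu(7) by blast
    then obtain k where "z = c k" using set_cs_iff[of z 0] by auto
    then have "E u (c k)" using z by simp
    from claim1[OF wu(2) wu(4) this] show False
    proof
      assume "\<exists>a. nbhd E u \<inter> set cs = {c a}"
      then obtain a where a: "nbhd E u \<inter> set cs = {c a}" by blast
      have Eu: "\<And>x. E u (c x) \<longleftrightarrow> c x = c a" using a c_in by (auto simp: nbhd_def)
      show False
        by (rule T2_free[OF wu(2) wu(4) wu(1) wu(3) uw wn, of a]) (simp_all add: Eu c_eq8)
    next
      assume "\<exists>a. nbhd E u \<inter> set cs = {c a, c (a+2)}"
      then obtain a where a: "nbhd E u \<inter> set cs = {c a, c (a+2)}" by blast
      have Eu: "\<And>x. E u (c x) \<longleftrightarrow> c x = c a \<or> c x = c (a+2)" using a c_in by (auto simp: nbhd_def)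
      show False
        by (rule X2_free[OF wu(2) wu(4) wu(1) wu(3) uw wn, of a]) (simp_all add: Eu c_eq8)
    qed
  qed
  then obtain z where z: "z \<in> set cs" "E v z" by blast
  then obtain k where "z = c k" using set_cs_iff[of z 0] by auto
  then show ?thesis using claim1[OF v False] z by simp
qed

end

theorem proposition3p4:
  fixes V :: "'a set" and E :: "'a \<Rightarrow> 'a \<Rightarrow> bool" and cs :: "'a list"
  assumes "simple_graph V E"
    and "connected_graph V E"
    and "almost_bipartite_permutation V E"
    and "shortest_hole V E cs"
    and "v \<in> V"
  shows "(\<exists>i<length cs. nbhd E v \<inter> set cs = {cs ! i}) \<or>
         (\<exists>i<length cs. nbhd E v \<inter> set cs = {cs ! i, cs ! ((i + 2) mod length cs)})"
proof -
  interpret ctx V E cs using assms by unfold_locales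
  from main[OF assms(2) assms(5)] show ?thesis
  proof
    assume "\<exists>a. nbhd E v \<inter> set cs = {c a}"
    then obtain a where a: "nbhd E v \<inter> set cs = {c a}" by blast
    obtain i where "i < length cs" "cs ! i = c a" using conv[of a] by blast
    then show ?thesis using a by auto
  next
    assume "\<exists>a. nbhd E v \<inter> set cs = {c a, c (a+2)}"
    then obtain a where a: "nbhd E v \<inter> set cs = {c a, c (a+2)}" by blast
    obtain i where "i < length cs" "cs ! i = c a" "cs ! ((i+2) mod length cs) = c (a+2)" using conv[of a] by blast
    then show ?thesis using a by auto
  qed
qed

end
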